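(* Assume the setting in the context (including conditions (1) and (2) on $\theta_i$) with $\gamma\le1$. Let $\epsilon,\eta\ge0$ and suppose $\tilde x\in\tilde{\mathcal{X}}$ is an $\epsilon$-PNE of $\tilde\Gamma$ satisfying the $\eta$-stability condition with respect to a generator profile $(Z(i,\tilde x))_i$, where $Z(i,\tilde x)=\{x_i^1,\dots,x_i^{d+1}\}$ with corresponding weights $\alpha(i,\tilde x)=(\alpha_i^l)_{l=1}^{d+1}$. Let the players choose random actions $X_i$ independently, with $\mathbb{P}(X_i=x_i^l)=\alpha_i^l$. Then for every $i\in N$, $$\mathbb{E}[f_i(X_i,X_{-i})]\le\mathbb{E}[f_i(x_i,X_{-i})]+\check\epsilon\quad\text{for all }x_i\in\mathcal{X}_i,$$ where $\check\epsilon=\epsilon+\eta+2H\big(\frac{(\sqrt n+1)M\Delta}{n}\big)^\gamma$; i.e. this profile of mixed strategies is an $\check\epsilon$-mixed Nash equilibrium of $\Gamma$.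
   Context: Setting: $N=\{1,\dots,n\}$; for each $i$, $\mathcal{X}_i\subset\mathbb{R}^d$ nonempty, closed, bounded, with diameter $\le\Delta$; $\tilde{\mathcal{X}}_i=\operatorname{conv}(\mathcal{X}_i)$; $\tilde{\mathcal{X}}=\prod_i\tilde{\mathcal{X}}_i$, $\tilde{\mathcal{X}}_{-i}=\prod_{j\ne i}\tilde{\mathcal{X}}_j$. $A_j$ real $q\times d$ matrices with $\|A_j\|_2\le M$. $\Omega\subset\mathbb{R}^q$ a neighborhood of $\{\frac1n\sum_jA_jy_j:y_j\in\tilde{\mathcal{X}}_j\}$; $\theta_i:\mathcal{X}_i\times\Omega\to\mathbb{R}$ with (1) $\theta_i(\cdot,y)$ lower semicontinuous on $\mathcal{X}_i$, (2) $|\theta_i(x_i,y')-\theta_i(x_i,y)|\le H\|y'-y\|^\gamma$ for all $i,x_i,y,y'$ ($H,\gamma>0$). Game $\Gamma$ costs: $f_i(x_i,x_{-i})=\theta_i(x_i,\frac1n\sum_jA_jx_j)$, $x_i\in\mathcal{X}_i$, $x_{-i}\in\tilde{\mathcal{X}}_{-i}$. Convexified game $\tilde\Gamma$: action sets $\tilde{\mathcal{X}}_i$, costs $\tilde f_i(x_i,x_{-i})=\inf\{\sum_{k=1}^{d+1}\alpha^kf_i(z^k,x_{-i}):\alpha\in\mathcal{S}_d,z^k\in\mathcal{X}_i,x_i=\sum_k\alpha^kz^k\}$ ($\mathcal{S}_d$ the probability simplex of $\mathbb{R}^{d+1}$). A generator for $(i,x)$ is a set $Z(i,x)=\{z^1,\ldots,z^{d+1}\}\subset\mathcal{X}_i$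 with weights $\alpha(i,x)\in\mathcal{S}_d$ attaining this infimum. An $\epsilon$-PNE of $\tilde\Gamma$: $x\in\tilde{\mathcal{X}}$ with $\tilde f_i(x_i,x_{-i})\le\tilde f_i(y_i,x_{-i})+\epsilon$ for all $i$, $y_i\in\tilde{\mathcal{X}}_i$. $\eta$-stability with respect to $(Z(i,x))_i$: $\tilde f_i(y_i,x_{-i})\le\tilde f_i(x_i,x_{-i})+\eta$ for all $i$, $y_i\in Z(i,x)$. *)

theory Defs
  imports "HOL-Analysis.Analysis"
begin

definition lsc_on :: "'a::metric_space set \<Rightarrow> ('a \<Rightarrow> real) \<Rightarrow> bool" where
  "lsc_on S f \<longleftrightarrow> (\<forall>x\<in>S. \<forall>t. t < f x \<longrightarrow>
      (\<exists>e>0. \<forall>y\<in>S. dist y x < e \<longrightarrow> t < f y))"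

definition simplex_weights :: "nat \<Rightarrow> (nat \<Rightarrow> real) set" where
  "simplex_weights d = {a. (\<forall>k\<le>d. 0 \<le> a k) \<and> (\<Sum>k\<le>d. a k) = 1}"

definition game_cost ::
  "nat \<Rightarrow> (nat \<Rightarrow> real^'d \<Rightarrow> real^'q \<Rightarrow> real) \<Rightarrow> (nat \<Rightarrow> real^'d^'q)
     \<Rightarrow> nat \<Rightarrow> (nat \<Rightarrow> real^'d) \<Rightarrow> real" where
  "game_cost n \<theta> A i x = \<theta> i (x i) ((1 / real n) *\<^sub>R (\<Sum>j\<in>{1..n}. A j *v x j))"

text \<open>Convexified cost tilde f_i(y, x_{-i}) (the i-th component of x is ignored),
  with d+1 = CARD('d)+1 generator points indexed by {0..CARD('d)}.\<close>
definition conv_cost ::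
  "nat \<Rightarrow> (nat \<Rightarrow> real^'d \<Rightarrow> real^'q \<Rightarrow> real) \<Rightarrow> (nat \<Rightarrow> real^'d^'q)
     \<Rightarrow> (nat \<Rightarrow> (real^'d) set) \<Rightarrow> nat \<Rightarrow> real^'d \<Rightarrow> (nat \<Rightarrow> real^'d) \<Rightarrow> real" where
  "conv_cost n \<theta> A X i y x =
     Inf {(\<Sum>k\<le>CARD('d). a k * game_cost n \<theta> A i (x(i := z k))) | a z.
            a \<in> simplex_weights CARD('d) \<and> (\<forall>k\<le>CARD('d). z k \<in> X i)
            \<and> y = (\<Sum>k\<le>CARD('d). a k *\<^sub>R z k)}"

text \<open>Expectation E[g(X)] where players j in 1..n choose independently the random
  action X_j = z j l with probability a j l, l in {0..CARD('d)}; written as the explicit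
  finite sum over all index profiles l (so repeated generator points are handled correctly).\<close>
definition mixed_expect ::
  "nat \<Rightarrow> (nat \<Rightarrow> nat \<Rightarrow> real^'d) \<Rightarrow> (nat \<Rightarrow> nat \<Rightarrow> real)
     \<Rightarrow> ((nat \<Rightarrow> real^'d) \<Rightarrow> real) \<Rightarrow> real" where
  "mixed_expect n z a g =
     (\<Sum>l\<in>PiE {1..n} (\<lambda>_. {..CARD('d)}).
        (\<Prod>j\<in>{1..n}. a j (l j)) * g (\<lambda>j. z j (l j)))"

end

theory Submission
  imports Defs "HOL-Analysis.Analysis"
begin


lemma sum_PiE_split:
  assumes "finite I" "i \<in> I" "\<And>j. j \<in> I \<Longrightarrow> finite (S j)"
  shows "(\<Sum>l\<in>PiE I S. F l) = (\<Sum>s\<in>S i. \<Sum>m\<in>PiE (I-{i}) S. F (m(i:=s)))"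
proof -
  have I: "I = insert i (I - {i})" using assms by blast
  have "(\<Sum>l\<in>PiE I S. F l) = (\<Sum>l\<in>PiE (insert i (I - {i})) S. F l)" using I by simp
  also have "\<dots> = (\<Sum>l\<in>(\<lambda>(y, g). g(i := y)) ` (S i \<times> PiE (I - {i}) S). F l)"
    by (subst PiE_insert_eq) (rule refl)
  also have "\<dots> = (\<Sum>p\<in>S i \<times> PiE (I - {i}) S. F ((\<lambda>(y, g). g(i := y)) p))"
    by (rule sum.reindex[unfolded comp_def]) (rule inj_combinator, simp)
  also have "\<dots> = (\<Sum>s\<in>S i. \<Sum>m\<in>PiE (I-{i}) S. F (m(i:=s)))"
    unfolding sum.cartesian_product by (rule sum.cong) auto
  finally show ?thesis .
qed

lemma me_const:
  assumes wts: "\<And>j. j \<in> {1..n} \<Longrightarrow> a j \<in> simplex_weights CARD('d)"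
  shows "mixed_expect n (z :: nat \<Rightarrow> nat \<Rightarrow> real^'d) a (\<lambda>_. c) = c"
proof -
  have "(\<Sum>l\<in>PiE {1..n} (\<lambda>_. {..CARD('d)}). (\<Prod>j\<in>{1..n}. a j (l j)))
      = (\<Prod>j\<in>{1..n}. \<Sum>t\<in>{..CARD('d)}. a j t)"
    by (rule prod_sum_PiE[symmetric]) auto
  also have "\<dots> = 1" using wts by (simp add: simplex_weights_def)
  finally show ?thesis unfolding mixed_expect_def by (simp add: sum_distrib_right[symmetric])
qed

lemma me_add: "mixed_expect n z a (\<lambda>Y. f Y + g Y) = mixed_expect n z a f + mixed_expect n z a g"
  unfolding mixed_expect_def by (simp add: distrib_left sum.distrib)

lemma me_cmult: "mixed_expect n z a (\<lambda>Y. c * f Y) = c * mixed_expect n z a f"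
  unfolding mixed_expect_def by (simp add: sum_distrib_left algebra_simps)

lemma me_sum: "mixed_expect n z a (\<lambda>Y. \<Sum>s\<in>T. f s Y) = (\<Sum>s\<in>T. mixed_expect n z a (f s))"
  unfolding mixed_expect_def by (simp add: sum_distrib_left sum.swap[of _ T])

lemma me_mono:
  assumes wts: "\<And>j. j \<in> {1..n} \<Longrightarrow> a j \<in> simplex_weights CARD('d)"
  and le: "\<And>Y. (\<And>j. j \<in> {1..n} \<Longrightarrow> Y j \<in> (z :: nat \<Rightarrow> nat \<Rightarrow> real^'d) j ` {..CARD('d)}) \<Longrightarrow> f Y \<le> g Y"
  shows "mixed_expect n z a f \<le> mixed_expect n z a g"
  unfolding mixed_expect_def
proof (rule sum_mono)
  fix l assume l: "l \<in> PiE {1..n} (\<lambda>_. {..CARD('d)})"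
  have "0 \<le> (\<Prod>j\<in>{1..n}. a j (l j))"
    using l wts by (intro prod_nonneg) (auto simp: simplex_weights_def PiE_iff)
  moreover have "f (\<lambda>j. z j (l j)) \<le> g (\<lambda>j. z j (l j))"
    using l by (intro le) (auto simp: PiE_iff)
  ultimately show "(\<Prod>j\<in>{1..n}. a j (l j)) * f (\<lambda>j. z j (l j)) \<le> (\<Prod>j\<in>{1..n}. a j (l j)) * g (\<lambda>j. z j (l j))"
    by (rule mult_left_mono[rotated])
qed

lemma me_split:
  assumes wts: "\<And>j. j \<in> {1..n} \<Longrightarrow> a j \<in> simplex_weights CARD('d)"
  and i: "i \<in> {1..n}"
  shows "mixed_expect n (z :: nat \<Rightarrow> nat \<Rightarrow> real^'d) a g
       = (\<Sum>s\<le>CARD('d). a i s * mixed_expect n z a (\<lambda>Y. g (Y(i := z i s))))"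
proof -
  let ?I = "{1..n::nat}" and ?S = "\<lambda>_::nat. {..CARD('d)}"
  define w' where "w' m = (\<Prod>j\<in>?I-{i}. a j (m j))" for m :: "nat \<Rightarrow> nat"
  define K where "K s = (\<Sum>m\<in>PiE (?I-{i}) ?S. w' m * g ((\<lambda>j. z j (m j))(i := z i s)))" for s
  have w: "(\<Prod>j\<in>?I. a j ((m(i:=s)) j)) = a i s * w' m" for m s
  proof -
    have "(\<Prod>j\<in>?I. a j ((m(i:=s)) j)) = a i s * (\<Prod>j\<in>?I-{i}. a j ((m(i:=s)) j))"
      using i by (subst prod.remove[of _ i]) auto
    also have "(\<Prod>j\<in>?I-{i}. a j ((m(i:=s)) j)) = w' m"
      unfolding w'_def by (rule prod.cong) auto
    finally show ?thesis .
  qed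
  have Y: "(\<lambda>j. z j ((m(i:=s)) j)) = (\<lambda>j. z j (m j))(i := z i s)" for m s
    by auto
  have gen: "mixed_expect n z a h = (\<Sum>s\<le>CARD('d). a i s * (\<Sum>m\<in>PiE (?I-{i}) ?S. w' m * h ((\<lambda>j. z j (m j))(i := z i s))))" for h
    unfolding mixed_expect_def
    apply (subst sum_PiE_split[OF _ i])
      apply simp apply simp
    apply (simp only: w Y sum_distrib_left mult.assoc)
    done
  have "mixed_expect n z a (\<lambda>Y. g (Y(i := z i s))) = K s" for s
  proof -
    have "mixed_expect n z a (\<lambda>Y. g (Y(i := z i s))) = (\<Sum>t\<le>CARD('d). a i t * K s)"
      unfolding gen K_def by simp
    also have "\<dots> = K s" using wts[OF i] by (simp add: simplex_weights_def sum_distrib_right[symmetric])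
    finally show ?thesis .
  qed
  moreover have "mixed_expect n z a g = (\<Sum>s\<le>CARD('d). a i s * K s)"
    unfolding gen K_def ..
  ultimately show ?thesis by simp
qed



lemma me_var:
  fixes v :: "nat \<Rightarrow> real^'d \<Rightarrow> 'b::real_inner"
  assumes wts: "\<And>j. j \<in> {1..n} \<Longrightarrow> a j \<in> simplex_weights CARD('d)"
  and cen: "\<And>j. j \<in> {1..n} \<Longrightarrow> (\<Sum>t\<le>CARD('d). a j t *\<^sub>R v j (z j t)) = 0"
  and J: "J \<subseteq> {1..n}"
  shows "mixed_expect n (z :: nat \<Rightarrow> nat \<Rightarrow> real^'d) a (\<lambda>Y. (norm (\<Sum>j\<in>J. v j (Y j)))\<^sup>2)
       = (\<Sum>j\<in>J. mixed_expect n z a (\<lambda>Y. (norm (v j (Y j)))\<^sup>2))"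
proof -
  have "finite J" using J finite_subset by blast
  then show ?thesis using J
  proof (induction J rule: finite_induct)
    case empty
    then show ?case using me_const[OF wts, where c=0] by simp
  next
    case (insert k J)
    define W where "W Y = (\<Sum>j\<in>J. v j (Y j))" for Y :: "nat \<Rightarrow> real^'d"
    have k: "k \<in> {1..n}" using insert by auto
    have cross: "mixed_expect n z a (\<lambda>Y. W Y \<bullet> v k (Y k)) = 0"
    proof -
      have "mixed_expect n z a (\<lambda>Y. W Y \<bullet> v k (Y k))
          = (\<Sum>s\<le>CARD('d). a k s * mixed_expect n z a (\<lambda>Y. W (Y(k := z k s)) \<bullet> v k (z k s)))"
        by (subst me_split[OF wts k]) simp_all
      also have "\<dots> = (\<Sum>s\<le>CARD('d). mixed_expect n z a (\<lambda>Y. a k s * (W Y \<bullet> v k (z k s))))"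
      proof (rule sum.cong[OF refl])
        fix s
        have "W (Y(k := z k s)) = W Y" for Y
          unfolding W_def using insert by (intro sum.cong) auto
        then show "a k s * mixed_expect n z a (\<lambda>Y. W (Y(k := z k s)) \<bullet> v k (z k s))
           = mixed_expect n z a (\<lambda>Y. a k s * (W Y \<bullet> v k (z k s)))"
          by (simp add: me_cmult)
      qed
      also have "\<dots> = mixed_expect n z a (\<lambda>Y. \<Sum>s\<le>CARD('d). a k s * (W Y \<bullet> v k (z k s)))"
        by (rule me_sum[symmetric])
      also have "\<dots> = mixed_expect n z a (\<lambda>Y. W Y \<bullet> (\<Sum>s\<le>CARD('d). a k s *\<^sub>R v k (z k s)))"
        by (simp add: inner_sum_right)
      also have "\<dots> = 0" using cen[OF k] me_const[OF wts, where c=0] by simp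
      finally show ?thesis .
    qed
    have eq: "(norm (\<Sum>j\<in>insert k J. v j (Y j)))\<^sup>2 = (norm (W Y))\<^sup>2 + 2 * (W Y \<bullet> v k (Y k)) + (norm (v k (Y k)))\<^sup>2" for Y
    proof -
      have "(\<Sum>j\<in>insert k J. v j (Y j)) = v k (Y k) + W Y" unfolding W_def using insert by simp
      then show ?thesis
        by (simp add: power2_norm_eq_inner inner_add_left inner_add_right inner_commute)
    qed
    have "mixed_expect n z a (\<lambda>Y. (norm (\<Sum>j\<in>insert k J. v j (Y j)))\<^sup>2)
       = mixed_expect n z a (\<lambda>Y. (norm (W Y))\<^sup>2) + 2 * mixed_expect n z a (\<lambda>Y. W Y \<bullet> v k (Y k))
         + mixed_expect n z a (\<lambda>Y. (norm (v k (Y k)))\<^sup>2)"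
      unfolding eq by (simp add: me_add me_cmult)
    also have "\<dots> = (\<Sum>j\<in>J. mixed_expect n z a (\<lambda>Y. (norm (v j (Y j)))\<^sup>2)) + mixed_expect n z a (\<lambda>Y. (norm (v k (Y k)))\<^sup>2)"
      using insert cross unfolding W_def by simp
    finally show ?case using insert by simp
  qed
qed

lemma jensen_powr:
  fixes w g :: "'i \<Rightarrow> real"
  assumes fin: "finite S" and w0: "\<And>l. l \<in> S \<Longrightarrow> 0 \<le> w l" and w1: "(\<Sum>l\<in>S. w l) = 1"
  and g0: "\<And>l. l \<in> S \<Longrightarrow> 0 \<le> g l" and p: "0 < p" "p \<le> 1"
  and B: "(\<Sum>l\<in>S. w l * g l) \<le> B" and B0: "0 \<le> B"
  shows "(\<Sum>l\<in>S. w l * g l powr p) \<le> B powr p"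
proof -
  have tang: "(\<Sum>l\<in>S. w l * g l powr p) \<le> c powr p" if c: "c > 0" "B \<le> c" for c
  proof -
    have pt: "g l powr p \<le> c powr p * (p * (g l / c) + (1 - p))" if l: "l \<in> S" for l
    proof (cases "g l = 0")
      case True then show ?thesis using p c by simp
    next
      case False
      then have gl: "g l / c > 0" using g0[OF l] c by simp
      have "(g l / c) powr p * 1 powr (1 - p) \<le> p * (g l / c) + (1 - p) * 1"
        by (rule Youngs_inequality_0) (use p gl in auto)
      then have "(g l / c) powr p \<le> p * (g l / c) + (1 - p)" by simp
      moreover have "g l powr p = c powr p * (g l / c) powr p"
        using c g0[OF l] by (simp add: powr_divide)
      ultimately show ?thesis using c by (simp add: mult_left_mono)
    qed
    have "(\<Sum>l\<in>S. w l * g l powr p) \<le> (\<Sum>l\<in>S. w l * (c powr p * (p * (g l / c) + (1 - p))))"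
      by (intro sum_mono mult_left_mono pt w0)
    also have "\<dots> = (\<Sum>l\<in>S. c powr p * (p / c * (w l * g l) + (1 - p) * w l))"
      by (intro sum.cong) (auto simp: algebra_simps)
    also have "\<dots> = c powr p * (p / c * (\<Sum>l\<in>S. w l * g l) + (1 - p) * (\<Sum>l\<in>S. w l))"
      by (simp add: sum_distrib_left sum.distrib distrib_left)
    also have "\<dots> \<le> c powr p * (p / c * c + (1 - p))"
    proof -
      have "p / c * (\<Sum>l\<in>S. w l * g l) \<le> p / c * c" using B c p by (intro mult_left_mono) auto
      then show ?thesis using w1 by (intro mult_left_mono) auto
    qed
    also have "\<dots> = c powr p" using c by simp
    finally show ?thesis .
  qed
  show ?thesis
  proof (cases "B > 0")
    case True then show ?thesis using tang[of B] by simp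
  next
    case False
    show ?thesis
    proof (rule ccontr)
      assume "\<not> ?thesis"
      then have x: "(\<Sum>l\<in>S. w l * g l powr p) > 0" using False B0 by simp
      define x where "x = (\<Sum>l\<in>S. w l * g l powr p)"
      define c where "c = (x / 2) powr (1 / p)"
      have "c > 0" using x p unfolding c_def x_def by simp
      then have "x \<le> c powr p" using tang[of c] False unfolding x_def by simp
      also have "c powr p = x / 2" unfolding c_def using p x x_def by (simp add: powr_powr)
      finally show False using x x_def by simp
    qed
  qed
qed

lemma lsc_compact_bdd:
  assumes cS: "compact S" and l: "lsc_on S f"
  shows "\<exists>B. \<forall>x\<in>S. B \<le> f x"
proof -
  have "\<forall>x\<in>S. \<exists>e. e > 0 \<and> (\<forall>y\<in>S. dist y x < e \<longrightarrow> f x - 1 < f y)"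
  proof
    fix x assume x: "x \<in> S"
    have "f x - 1 < f x" by simp
    then show "\<exists>e. e > 0 \<and> (\<forall>y\<in>S. dist y x < e \<longrightarrow> f x - 1 < f y)"
      using l x unfolding lsc_on_def by blast
  qed
  then have "\<exists>e. \<forall>x\<in>S. e x > 0 \<and> (\<forall>y\<in>S. dist y x < e x \<longrightarrow> f x - 1 < f y)"
    by (rule bchoice)
  then obtain e where e: "\<forall>x\<in>S. e x > 0 \<and> (\<forall>y\<in>S. dist y x < e x \<longrightarrow> f x - 1 < f y)"
    by (elim exE)
  have opn: "\<And>c. c \<in> S \<Longrightarrow> open (ball c (e c))" by simp
  have cov: "S \<subseteq> (\<Union>c\<in>S. ball c (e c))"
  proof
    fix x assume x: "x \<in> S"
    then have "x \<in> ball x (e x)" using e by simp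
    then show "x \<in> (\<Union>c\<in>S. ball c (e c))" using x by blast
  qed
  obtain C where C: "C \<subseteq> S" "finite C" "S \<subseteq> (\<Union>c\<in>C. ball c (e c))"
    by (rule compactE_image[OF cS opn cov])
  show ?thesis
  proof (cases "C = {}")
    case True then show ?thesis using C by auto
  next
    case False
    show ?thesis
    proof (intro exI ballI)
      fix y assume y: "y \<in> S"
      then obtain c where c: "c \<in> C" "y \<in> ball c (e c)" using C(3) by blast
      then have cS': "c \<in> S" using C(1) by blast
      have dy: "dist y c < e c" using c(2) by (simp add: dist_commute)
      have "Min ((\<lambda>c. f c - 1) ` C) \<le> f c - 1" using C(2) c(1) by simp
      also have "\<dots> < f y" using e cS' y dy by blast
      finally show "Min ((\<lambda>c. f c - 1) ` C) \<le> f y" by simp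
    qed
  qed
qed


lemma pw: "0 \<le> (t::real) \<Longrightarrow> 0 < g \<Longrightarrow> t powr g = (t^2) powr (g/2)"
proof (cases "t = 0")
  case True then show ?thesis by simp
next
  case False
  assume t: "0 \<le> t"
  then have tp: "t > 0" using False by simp
  have "t^2 = t powr 2" using powr_realpow[OF tp, of 2] by simp
  then have "(t^2) powr (g/2) = t powr (2 * (g/2))" by (simp add: powr_powr)
  then show ?thesis by simp
qed


theorem proposition3:
  fixes n :: nat
    and X :: "nat \<Rightarrow> (real^'d) set"
    and A :: "nat \<Rightarrow> real^'d^'q"
    and \<theta> :: "nat \<Rightarrow> real^'d \<Rightarrow> real^'q \<Rightarrow> real"
    and \<Omega> :: "(real^'q) set"
    and \<Delta> M H \<gamma> \<epsilon> \<eta> :: real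
    and xt :: "nat \<Rightarrow> real^'d"
    and z :: "nat \<Rightarrow> nat \<Rightarrow> real^'d"
    and a :: "nat \<Rightarrow> nat \<Rightarrow> real"
  assumes n_pos: "n \<ge> 1"
    and X_ne: "\<And>i. i \<in> {1..n} \<Longrightarrow> X i \<noteq> {}"
    and X_closed: "\<And>i. i \<in> {1..n} \<Longrightarrow> closed (X i)"
    and X_bounded: "\<And>i. i \<in> {1..n} \<Longrightarrow> bounded (X i)"
    and X_diam: "\<And>i. i \<in> {1..n} \<Longrightarrow> diameter (X i) \<le> \<Delta>"
    and A_norm: "\<And>j. j \<in> {1..n} \<Longrightarrow> onorm (\<lambda>v. A j *v v) \<le> M"
    and \<Omega>_open: "open \<Omega>"
    and \<Omega>_nbhd: "{(1 / real n) *\<^sub>R (\<Sum>j\<in>{1..n}. A j *v y j) | y.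
                    \<forall>j\<in>{1..n}. y j \<in> convex hull (X j)} \<subseteq> \<Omega>"
    and \<theta>_lsc: "\<And>i y. i \<in> {1..n} \<Longrightarrow> y \<in> \<Omega> \<Longrightarrow> lsc_on (X i) (\<lambda>xi. \<theta> i xi y)"
    and H_pos: "H > 0" and \<gamma>_pos: "\<gamma> > 0" and \<gamma>_le1: "\<gamma> \<le> 1"
    and \<theta>_hoelder: "\<And>i xi y y'. i \<in> {1..n} \<Longrightarrow> xi \<in> X i \<Longrightarrow> y \<in> \<Omega> \<Longrightarrow> y' \<in> \<Omega> \<Longrightarrow>
        \<bar>\<theta> i xi y' - \<theta> i xi y\<bar> \<le> H * dist y' y powr \<gamma>"
    and eps_nn: "\<epsilon> \<ge> 0" and eta_nn: "\<eta> \<ge> 0"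
    \<comment> \<open>xt is an epsilon-PNE of the convexified game\<close>
    and xt_in: "\<And>i. i \<in> {1..n} \<Longrightarrow> xt i \<in> convex hull (X i)"
    and xt_PNE: "\<And>i y. i \<in> {1..n} \<Longrightarrow> y \<in> convex hull (X i) \<Longrightarrow>
        conv_cost n \<theta> A X i (xt i) xt \<le> conv_cost n \<theta> A X i y xt + \<epsilon>"
    \<comment> \<open>(z i l, a i l)_{l = 0..d} is a generator for (i, xt)\<close>
    and gen_pts: "\<And>i l. i \<in> {1..n} \<Longrightarrow> l \<le> CARD('d) \<Longrightarrow> z i l \<in> X i"
    and gen_wts: "\<And>i. i \<in> {1..n} \<Longrightarrow> a i \<in> simplex_weights CARD('d)"
    and gen_comb: "\<And>i. i \<in> {1..n} \<Longrightarrow> xt i = (\<Sum>l\<le>CARD('d). a i l *\<^sub>R z i l)"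
    and gen_opt: "\<And>i. i \<in> {1..n} \<Longrightarrow>
        conv_cost n \<theta> A X i (xt i) xt
          = (\<Sum>l\<le>CARD('d). a i l * game_cost n \<theta> A i (xt(i := z i l)))"
    \<comment> \<open>eta-stability with respect to the generators\<close>
    and stable: "\<And>i l. i \<in> {1..n} \<Longrightarrow> l \<le> CARD('d) \<Longrightarrow>
        conv_cost n \<theta> A X i (z i l) xt \<le> conv_cost n \<theta> A X i (xt i) xt + \<eta>"
  shows "\<forall>i\<in>{1..n}. \<forall>x\<in>X i.
           mixed_expect n z a (game_cost n \<theta> A i)
             \<le> mixed_expect n z a (\<lambda>Y. game_cost n \<theta> A i (Y(i := x)))
                + (\<epsilon> + \<eta> + 2 * H * (((sqrt (real n) + 1) * M * \<Delta>) / real n) powr \<gamma>)"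
proof (intro ballI)
  fix i x assume i: "i \<in> {1..n}" and x: "x \<in> X i"
  let ?I = "{1..n::nat}"
  let ?E = "mixed_expect n z a"
  have wts: "\<And>j. j \<in> {1..n} \<Longrightarrow> a j \<in> simplex_weights CARD('d)" by (rule gen_wts)
  have a0: "\<And>j t. j \<in> ?I \<Longrightarrow> t \<le> CARD('d) \<Longrightarrow> 0 \<le> a j t"
    using wts by (auto simp: simplex_weights_def)
  have mc: "?E (\<lambda>_. c) = c" for c by (rule me_const) (rule wts)
  have mmono: "?E f \<le> ?E g" if "\<And>Y. (\<And>j. j \<in> ?I \<Longrightarrow> Y j \<in> z j ` {..CARD('d)}) \<Longrightarrow> f Y \<le> g Y" for f g
    by (rule me_mono) (erule wts, rule that)
  have a1: "\<And>j. j \<in> ?I \<Longrightarrow> (\<Sum>t\<le>CARD('d). a j t) = 1"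
    using wts by (auto simp: simplex_weights_def)
  have nposr: "real n > 0" using n_pos by simp
  have blA: "bounded_linear (\<lambda>v. A j *v v)" for j
    by (simp add: linear_linear[symmetric])
  have M0: "0 \<le> M" using A_norm[of 1] onorm_pos_le[OF blA[of 1]] n_pos by auto
  have Anorm: "norm (A j *v v) \<le> M * norm v" if "j \<in> ?I" for j v
    using onorm[OF blA[of j], of v] A_norm[OF that] by (meson mult_right_mono norm_ge_zero order_trans)
  have dhull: "dist w y \<le> \<Delta>" if j: "j \<in> ?I" and w: "w \<in> X j" and y: "y \<in> convex hull (X j)" for j w y
  proof -
    have "X j \<subseteq> cball w \<Delta>"
      using diameter_bounded_bound[OF X_bounded[OF j] w] X_diam[OF j] by (force simp: subset_iff)
    then have "convex hull (X j) \<subseteq> cball w \<Delta>" by (intro hull_minimal) auto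
    then show ?thesis using y by auto
  qed
  have D0: "0 \<le> \<Delta>" using dhull[OF i x hull_inc[OF x]] by simp
  define yv where "yv Y = (1 / real n) *\<^sub>R (\<Sum>j\<in>?I. A j *v Y j)" for Y :: "nat \<Rightarrow> real^'d"
  have gc: "game_cost n \<theta> A k Y = \<theta> k (Y k) (yv Y)" for k Y
    unfolding game_cost_def yv_def ..
  define V where "V Y = (\<Sum>j\<in>?I-{i}. A j *v (Y j - xt j))" for Y :: "nat \<Rightarrow> real^'d"
  have sumI: "(\<Sum>j\<in>?I. A j *v (Y(i:=c)) j) = A i *v c + (\<Sum>j\<in>?I-{i}. A j *v Y j)" for Y c
  proof -
    have "(\<Sum>j\<in>?I. A j *v (Y(i:=c)) j) = A i *v c + (\<Sum>j\<in>?I-{i}. A j *v (Y(i:=c)) j)"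
      using i by (subst sum.remove[of _ i]) auto
    also have "(\<Sum>j\<in>?I-{i}. A j *v (Y(i:=c)) j) = (\<Sum>j\<in>?I-{i}. A j *v Y j)"
      by (rule sum.cong) auto
    finally show ?thesis .
  qed
  have ydiff: "yv (Y(i:=c)) - yv (xt(i:=c)) = (1 / real n) *\<^sub>R V Y" for Y c
  proof -
    have "yv (Y(i:=c)) - yv (xt(i:=c)) = (1 / real n) *\<^sub>R ((\<Sum>j\<in>?I-{i}. A j *v Y j) - (\<Sum>j\<in>?I-{i}. A j *v xt j))"
      unfolding yv_def sumI by (simp add: algebra_simps)
    also have "(\<Sum>j\<in>?I-{i}. A j *v Y j) - (\<Sum>j\<in>?I-{i}. A j *v xt j) = V Y"
      unfolding V_def by (simp add: sum_subtractf matrix_vector_mult_diff_distrib)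
    finally show ?thesis .
  qed
  have ydiffi: "yv (xt(i:=c)) - yv xt = (1 / real n) *\<^sub>R (A i *v (c - xt i))" for c
  proof -
    have "xt = xt(i := xt i)" by simp
    then have "yv xt = (1 / real n) *\<^sub>R (A i *v xt i + (\<Sum>j\<in>?I-{i}. A j *v xt j))"
      unfolding yv_def by (metis sumI)
    then show ?thesis unfolding yv_def sumI by (simp add: algebra_simps)
  qed
  have inO: "yv Y \<in> \<Omega>" if "\<And>j. j \<in> ?I \<Longrightarrow> Y j \<in> convex hull (X j)" for Y
    using \<Omega>_nbhd that unfolding yv_def by blast
  have supp: "Y j \<in> convex hull (X j)" if Ysupp: "\<And>j. j \<in> ?I \<Longrightarrow> Y j \<in> z j ` {..CARD('d)}" and jI: "j \<in> ?I" for Y j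
  proof -
    obtain t where "t \<le> CARD('d)" "Y j = z j t" using Ysupp[OF jI] by blast
    then show ?thesis using gen_pts[OF jI] by (auto intro: hull_inc)
  qed
  have vbound: "norm (A j *v (w - xt j)) \<le> M * \<Delta>" if "j \<in> ?I" "w \<in> X j" for j w
  proof -
    have "norm (A j *v (w - xt j)) \<le> M * norm (w - xt j)" by (rule Anorm[OF that(1)])
    also have "\<dots> \<le> M * \<Delta>" using dhull[OF that xt_in[OF that(1)]] M0
      by (intro mult_left_mono) (auto simp: dist_norm)
    finally show ?thesis .
  qed
  define \<delta> where "\<delta> = ?E (\<lambda>Y. norm ((1 / real n) *\<^sub>R V Y) powr \<gamma>)"
  have stepA: "?E (game_cost n \<theta> A i) \<le> conv_cost n \<theta> A X i (xt i) xt + H * \<delta>"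
  proof -
    have "?E (game_cost n \<theta> A i) = (\<Sum>s\<le>CARD('d). a i s * ?E (\<lambda>Y. game_cost n \<theta> A i (Y(i := z i s))))"
      by (rule me_split) (erule wts, rule i)
    also have "\<dots> \<le> (\<Sum>s\<le>CARD('d). a i s * (game_cost n \<theta> A i (xt(i := z i s)) + H * \<delta>))"
    proof (intro sum_mono mult_left_mono)
      fix s assume s: "s \<in> {..CARD('d)}"
      show "0 \<le> a i s" using a0[OF i] s by simp
      have zs: "z i s \<in> X i" using gen_pts[OF i] s by simp
      have "?E (\<lambda>Y. game_cost n \<theta> A i (Y(i := z i s)))
          \<le> ?E (\<lambda>Y. game_cost n \<theta> A i (xt(i := z i s)) + H * norm ((1 / real n) *\<^sub>R V Y) powr \<gamma>)"
      proof (rule mmono)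
        fix Y assume Y: "\<And>j. j \<in> ?I \<Longrightarrow> Y j \<in> z j ` {..CARD('d)}"
        have o1: "yv (Y(i := z i s)) \<in> \<Omega>" using supp[OF Y] zs by (intro inO) (auto intro: hull_inc)
        have o2: "yv (xt(i := z i s)) \<in> \<Omega>" using xt_in zs by (intro inO) (auto intro: hull_inc)
        have "\<theta> i (z i s) (yv (Y(i := z i s))) \<le> \<theta> i (z i s) (yv (xt(i := z i s))) + H * dist (yv (Y(i := z i s))) (yv (xt(i := z i s))) powr \<gamma>"
          using \<theta>_hoelder[OF i zs o2 o1] by linarith
        then show "game_cost n \<theta> A i (Y(i := z i s)) \<le> game_cost n \<theta> A i (xt(i := z i s)) + H * norm ((1 / real n) *\<^sub>R V Y) powr \<gamma>"
          unfolding gc by (simp add: dist_norm ydiff)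
      qed
      also have "\<dots> = game_cost n \<theta> A i (xt(i := z i s)) + H * \<delta>"
        unfolding \<delta>_def me_add me_cmult mc ..
      finally show "?E (\<lambda>Y. game_cost n \<theta> A i (Y(i := z i s))) \<le> game_cost n \<theta> A i (xt(i := z i s)) + H * \<delta>" .
    qed
    also have "\<dots> = (\<Sum>s\<le>CARD('d). a i s * game_cost n \<theta> A i (xt(i := z i s))) + (\<Sum>s\<le>CARD('d). a i s) * (H * \<delta>)"
      by (simp add: distrib_left sum.distrib sum_distrib_right)
    also have "\<dots> = conv_cost n \<theta> A X i (xt i) xt + H * \<delta>"
      by (simp add: gen_opt[OF i] a1[OF i])
    finally show ?thesis .
  qed
  have stepC: "conv_cost n \<theta> A X i x xt \<le> game_cost n \<theta> A i (xt(i := x))"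
  proof -
    let ?S = "{(\<Sum>k\<le>CARD('d). a' k * game_cost n \<theta> A i (xt(i := z' k))) | a' z'.
            a' \<in> simplex_weights CARD('d) \<and> (\<forall>k\<le>CARD('d). z' k \<in> X i)
            \<and> x = (\<Sum>k\<le>CARD('d). a' k *\<^sub>R z' k)}"
    have oxt: "yv xt \<in> \<Omega>" using xt_in by (intro inO) auto
    obtain B0 where B0: "\<And>w. w \<in> X i \<Longrightarrow> B0 \<le> \<theta> i w (yv xt)"
      using lsc_compact_bdd[of "X i" "\<lambda>w. \<theta> i w (yv xt)"] \<theta>_lsc[OF i oxt]
        X_closed[OF i] X_bounded[OF i] compact_eq_bounded_closed by blast
    have lb: "B0 - H * (M * \<Delta> / real n) powr \<gamma> \<le> game_cost n \<theta> A i (xt(i := w))" if w: "w \<in> X i" for w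
    proof -
      have o1: "yv (xt(i := w)) \<in> \<Omega>" using xt_in w by (intro inO) (auto intro: hull_inc)
      have h: "\<theta> i w (yv xt) \<le> \<theta> i w (yv (xt(i := w))) + H * dist (yv xt) (yv (xt(i := w))) powr \<gamma>"
        using \<theta>_hoelder[OF i w o1 oxt] by linarith
      have "dist (yv xt) (yv (xt(i := w))) = norm ((1 / real n) *\<^sub>R (A i *v (w - xt i)))"
        by (metis dist_commute dist_norm ydiffi)
      also have "\<dots> \<le> M * \<Delta> / real n"
        using vbound[OF i w] nposr by (simp add: divide_simps mult.commute)
      finally have "dist (yv xt) (yv (xt(i := w))) powr \<gamma> \<le> (M * \<Delta> / real n) powr \<gamma>"
        using \<gamma>_pos by (intro powr_mono2) auto
      then have "H * dist (yv xt) (yv (xt(i := w))) powr \<gamma> \<le> H * (M * \<Delta> / real n) powr \<gamma>"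
        using H_pos by (intro mult_left_mono) auto
      then show ?thesis using h B0[OF w] unfolding gc by simp
    qed
    have bdd: "bdd_below ?S"
    proof (rule bdd_belowI)
      fix r assume "r \<in> ?S"
      then obtain a' z' where r: "r = (\<Sum>k\<le>CARD('d). a' k * game_cost n \<theta> A i (xt(i := z' k)))"
        and a': "a' \<in> simplex_weights CARD('d)" and z': "\<forall>k\<le>CARD('d). z' k \<in> X i" by blast
      have "(\<Sum>k\<le>CARD('d). a' k * (B0 - H * (M * \<Delta> / real n) powr \<gamma>)) \<le> r"
        unfolding r using a' z' lb by (intro sum_mono mult_left_mono) (auto simp: simplex_weights_def)
      then show "B0 - H * (M * \<Delta> / real n) powr \<gamma> \<le> r"
        using a' by (simp add: sum_distrib_right[symmetric] simplex_weights_def)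
    qed
    define a' where "a' = (\<lambda>k::nat. if k = 0 then 1 else (0::real))"
    have mem: "game_cost n \<theta> A i (xt(i := x)) \<in> ?S"
    proof -
      have s1: "(\<Sum>k\<le>CARD('d). a' k) = 1"
        unfolding a'_def by (subst sum.remove[of _ 0]) auto
      have A1: "a' \<in> simplex_weights CARD('d)"
        unfolding simplex_weights_def using s1 by (auto simp: a'_def)
      have A2: "x = (\<Sum>k\<le>CARD('d). a' k *\<^sub>R (\<lambda>k. x) k)"
        unfolding a'_def by (subst sum.remove[of _ 0]) auto
      have A3: "game_cost n \<theta> A i (xt(i := x)) = (\<Sum>k\<le>CARD('d). a' k * game_cost n \<theta> A i (xt(i := (\<lambda>k. x) k)))"
        unfolding a'_def by (subst sum.remove[of _ 0]) auto
      have A4: "\<forall>k\<le>CARD('d). (\<lambda>k. x) k \<in> X i" using x by simp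
      show ?thesis
        apply (rule CollectI)
        apply (rule exI[of _ a'])
        apply (rule exI[of _ "\<lambda>k. x"])
        apply (intro conjI A1 A2 A3 A4)
        done
    qed
    show ?thesis unfolding conv_cost_def by (rule cInf_lower[OF mem bdd])
  qed
  have stepD: "game_cost n \<theta> A i (xt(i := x)) \<le> ?E (\<lambda>Y. game_cost n \<theta> A i (Y(i := x))) + H * \<delta>"
  proof -
    have "game_cost n \<theta> A i (xt(i := x)) = ?E (\<lambda>_. game_cost n \<theta> A i (xt(i := x)))"
      by (simp add: mc)
    also have "\<dots> \<le> ?E (\<lambda>Y. game_cost n \<theta> A i (Y(i := x)) + H * norm ((1 / real n) *\<^sub>R V Y) powr \<gamma>)"
    proof (rule mmono)
      fix Y assume Y: "\<And>j. j \<in> ?I \<Longrightarrow> Y j \<in> z j ` {..CARD('d)}"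
      have o1: "yv (Y(i := x)) \<in> \<Omega>" using supp[OF Y] x by (intro inO) (auto intro: hull_inc)
      have o2: "yv (xt(i := x)) \<in> \<Omega>" using xt_in x by (intro inO) (auto intro: hull_inc)
      have "\<theta> i x (yv (xt(i := x))) \<le> \<theta> i x (yv (Y(i := x))) + H * dist (yv (Y(i := x))) (yv (xt(i := x))) powr \<gamma>"
        using \<theta>_hoelder[OF i x o2 o1] by (simp add: dist_commute)
      then show "game_cost n \<theta> A i (xt(i := x)) \<le> game_cost n \<theta> A i (Y(i := x)) + H * norm ((1 / real n) *\<^sub>R V Y) powr \<gamma>"
        unfolding gc by (simp add: dist_norm ydiff)
    qed
    also have "\<dots> = ?E (\<lambda>Y. game_cost n \<theta> A i (Y(i := x))) + H * \<delta>"
      unfolding \<delta>_def by (simp add: me_add me_cmult)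
    finally show ?thesis .
  qed
  have stepE: "\<delta> \<le> (((sqrt (real n) + 1) * M * \<Delta>) / real n) powr \<gamma>"
  proof -
    define v where "v j w = A j *v (w - xt j)" for j and w :: "real^'d"
    have cen: "(\<Sum>t\<le>CARD('d). a j t *\<^sub>R v j (z j t)) = 0" if j: "j \<in> ?I" for j
    proof -
      have "(\<Sum>t\<le>CARD('d). a j t *\<^sub>R v j (z j t)) = A j *v (\<Sum>t\<le>CARD('d). a j t *\<^sub>R (z j t - xt j))"
        by (simp add: v_def linear_sum[OF matrix_vector_mul_linear] matrix_vector_mult_scaleR)
      also have "(\<Sum>t\<le>CARD('d). a j t *\<^sub>R (z j t - xt j)) = (\<Sum>t\<le>CARD('d). a j t *\<^sub>R z j t) - (\<Sum>t\<le>CARD('d). a j t) *\<^sub>R xt j"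
        by (simp add: scaleR_diff_right sum_subtractf scaleR_sum_left)
      also have "\<dots> = 0" using gen_comb[OF j] a1[OF j] by simp
      finally show ?thesis by simp
    qed
    have VV: "V Y = (\<Sum>j\<in>?I-{i}. v j (Y j))" for Y unfolding V_def v_def ..
    have var: "?E (\<lambda>Y. (norm (V Y))\<^sup>2) = (\<Sum>j\<in>?I-{i}. ?E (\<lambda>Y. (norm (v j (Y j)))\<^sup>2))"
      unfolding VV by (rule me_var[where v=v and J="{1..n} - {i}" and n=n and a=a and z=z]) (erule wts, erule cen, auto)
    have each: "?E (\<lambda>Y. (norm (v j (Y j)))\<^sup>2) \<le> (M * \<Delta>)\<^sup>2" if j: "j \<in> ?I" for j
    proof -
      have "?E (\<lambda>Y. (norm (v j (Y j)))\<^sup>2) \<le> ?E (\<lambda>Y. (M * \<Delta>)\<^sup>2)"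
      proof (rule mmono)
        fix Y assume Y: "\<And>j. j \<in> ?I \<Longrightarrow> Y j \<in> z j ` {..CARD('d)}"
        then have "Y j \<in> X j" using gen_pts[OF j] Y[OF j] by auto
        then show "(norm (v j (Y j)))\<^sup>2 \<le> (M * \<Delta>)\<^sup>2"
          unfolding v_def using vbound[OF j] by (intro power_mono) auto
      qed
      then show ?thesis by (simp add: mc)
    qed
    have EV: "?E (\<lambda>Y. (norm (V Y))\<^sup>2) \<le> real n * (M * \<Delta>)\<^sup>2"
    proof -
      have "?E (\<lambda>Y. (norm (V Y))\<^sup>2) \<le> real (card (?I-{i})) * (M * \<Delta>)\<^sup>2"
        unfolding var by (rule sum_bounded_above) (use each in auto)
      also have "\<dots> \<le> real n * (M * \<Delta>)\<^sup>2"
        using i by (intro mult_right_mono) auto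
      finally show ?thesis .
    qed
    define B where "B = (M * \<Delta>)\<^sup>2 / real n"
    define g where "g Y = (norm ((1 / real n) *\<^sub>R V Y))\<^sup>2" for Y
    have Eg: "?E g \<le> B"
    proof -
      have "?E g = (1 / real n)\<^sup>2 * ?E (\<lambda>Y. (norm (V Y))\<^sup>2)"
      proof -
        have "g Y = (1 / real n)\<^sup>2 * (norm (V Y))\<^sup>2" for Y
          by (simp only: g_def norm_scaleR power_mult_distrib power2_abs)
        then have "g = (\<lambda>Y. (1 / real n)\<^sup>2 * (norm (V Y))\<^sup>2)" by (rule ext)
        then show ?thesis by (simp only: me_cmult)
      qed
      also have "\<dots> \<le> (1 / real n)\<^sup>2 * (real n * (M * \<Delta>)\<^sup>2)"
        using EV by (intro mult_left_mono) auto
      also have "\<dots> = B" unfolding B_def using nposr by (simp add: field_simps power2_eq_square)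
      finally show ?thesis .
    qed
    let ?S = "PiE ?I (\<lambda>_. {..CARD('d)})"
    let ?w = "\<lambda>l. \<Prod>j\<in>?I. a j (l j)"
    have w0: "0 \<le> ?w l" if "l \<in> ?S" for l
      using that a0 by (intro prod_nonneg) (auto simp: PiE_iff)
    have w1: "(\<Sum>l\<in>?S. ?w l) = 1"
      using mc[of 1] unfolding mixed_expect_def by simp
    have "\<delta> = (\<Sum>l\<in>?S. ?w l * g (\<lambda>j. z j (l j)) powr (\<gamma> / 2))"
      unfolding \<delta>_def mixed_expect_def g_def
      by (rule sum.cong[OF refl]) (subst pw[OF norm_ge_zero \<gamma>_pos], rule refl)
    also have "\<dots> \<le> B powr (\<gamma> / 2)"
      by (rule jensen_powr) (use w0 w1 \<gamma>_pos \<gamma>_le1 Eg in \<open>auto simp: g_def B_def mixed_expect_def intro!: finite_PiE\<close>)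
    also have "B powr (\<gamma> / 2) = (M * \<Delta> / sqrt (real n)) powr \<gamma>"
    proof -
      have "B = (M * \<Delta> / sqrt (real n))\<^sup>2" unfolding B_def using nposr by (simp add: power_divide)
      then have "B powr (\<gamma> / 2) = ((M * \<Delta> / sqrt (real n))\<^sup>2) powr (\<gamma> / 2)" by simp
      also have "\<dots> = (M * \<Delta> / sqrt (real n)) powr \<gamma>"
        by (rule pw[symmetric]) (use M0 D0 \<gamma>_pos in auto)
      finally show ?thesis .
    qed
    also have "\<dots> \<le> (((sqrt (real n) + 1) * M * \<Delta>) / real n) powr \<gamma>"
    proof (rule powr_mono2)
      show "0 \<le> \<gamma>" using \<gamma>_pos by simp
      show "0 \<le> M * \<Delta> / sqrt (real n)" using M0 D0 by simp
      have sq: "sqrt (real n) * sqrt (real n) = real n" by simp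
      have sp: "sqrt (real n) > 0" using nposr by simp
      have "sqrt (real n) * (M * \<Delta>) / real n = sqrt (real n) * (M * \<Delta>) / (sqrt (real n) * sqrt (real n))"
        by (simp only: sq)
      also have "\<dots> = M * \<Delta> / sqrt (real n)"
        by (rule mult_divide_mult_cancel_left) (use sp in simp)
      finally have "M * \<Delta> / sqrt (real n) = sqrt (real n) * (M * \<Delta>) / real n" by simp
      also have "\<dots> \<le> ((sqrt (real n) + 1) * M * \<Delta>) / real n"
      proof -
        have MD: "0 \<le> M * \<Delta>" using M0 D0 by simp
        have "sqrt (real n) * (M * \<Delta>) \<le> (sqrt (real n) + 1) * (M * \<Delta>)"
          by (rule mult_right_mono) (use MD in simp_all)
        then show ?thesis using nposr by (simp add: divide_right_mono mult.assoc)
      qed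
      finally show "M * \<Delta> / sqrt (real n) \<le> ((sqrt (real n) + 1) * M * \<Delta>) / real n" .
    qed
    finally show ?thesis .
  qed
  have "?E (game_cost n \<theta> A i) \<le> ?E (\<lambda>Y. game_cost n \<theta> A i (Y(i := x))) + (\<epsilon> + 2 * H * \<delta>)"
    using stepA stepC stepD xt_PNE[OF i hull_inc[OF x]] by linarith
  also have "\<dots> \<le> ?E (\<lambda>Y. game_cost n \<theta> A i (Y(i := x))) + (\<epsilon> + \<eta> + 2 * H * (((sqrt (real n) + 1) * M * \<Delta>) / real n) powr \<gamma>)"
  proof -
    have "2 * H * \<delta> \<le> 2 * H * (((sqrt (real n) + 1) * M * \<Delta>) / real n) powr \<gamma>"
      using stepE H_pos by (intro mult_left_mono) auto
    then show ?thesis using eta_nn by linarith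
  qed
  finally show "?E (game_cost n \<theta> A i) \<le> ?E (\<lambda>Y. game_cost n \<theta> A i (Y(i := x))) + (\<epsilon> + \<eta> + 2 * H * (((sqrt (real n) + 1) * M * \<Delta>) / real n) powr \<gamma>)" .
qed


end
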